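(* Let $1\le i,j\le N-1$ with $i\neq j$ and $i\ne j+1$. Then $T_j^{-1}\phi_iT_j=\phi_i$ in $\mathcal H_N(s)$.
   Context: $N\ge2$, $s$ an indeterminate. $\mathcal H_N(s)$ is the algebra over $\mathbb C(s)$ (or $\mathbb C(q,s)$) generated by $T_1,\dots,T_{N-1}$ with relations $(T_i+1)(T_i-s)=0$, $T_iT_{i+1}T_i=T_{i+1}T_iT_{i+1}$, $T_iT_j=T_jT_i$ for $|i-j|>1$; $T_i^{-1}=s^{-1}(T_i+1-s)$. For $1\le i<N$, $\phi_i:=s^{i-N}T_iT_{i+1}\cdots T_{N-1}T_{N-1}\cdots T_i$. *)

theory Defs
  imports Complex_Main "HOL-Computational_Algebra.Polynomial" "HOL-Computational_Algebra.Fraction_Field"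
begin

definition s_ind :: "complex poly fract" where
  "s_ind = Fract [:0, 1:] 1"

text \<open>A C(s)-algebra: a ring 'h with a unital ring homomorphism emb from C(s) into
  the centre of 'h.  is_hecke N emb T says that the elements T 1, ..., T (N-1) satisfy the
  defining relations of the Iwahori-Hecke algebra H_N(s).  Statements about H_N(s) are
  stated for every such algebra (H_N(s) itself being the universal one).\<close>
definition is_hecke :: "nat \<Rightarrow> (complex poly fract \<Rightarrow> 'h::ring_1) \<Rightarrow> (nat \<Rightarrow> 'h) \<Rightarrow> bool" where
  "is_hecke N emb T \<longleftrightarrow>
     emb 0 = 0 \<and> emb 1 = 1 \<and>
     (\<forall>a b. emb (a + b) = emb a + emb b) \<and>
     (\<forall>a b. emb (a * b) = emb a * emb b) \<and>
     (\<forall>a x. emb a * x = x * emb a) \<and>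
     (\<forall>i. 1 \<le> i \<and> i < N \<longrightarrow> (T i + 1) * (T i - emb s_ind) = 0) \<and>
     (\<forall>i. 1 \<le> i \<and> i + 1 < N \<longrightarrow> T i * T (i + 1) * T i = T (i + 1) * T i * T (i + 1)) \<and>
     (\<forall>i j. 1 \<le> i \<and> i < N \<and> 1 \<le> j \<and> j < N \<and> (i + 1 < j \<or> j + 1 < i) \<longrightarrow>
            T i * T j = T j * T i)"

definition Tinv :: "(complex poly fract \<Rightarrow> 'h::ring_1) \<Rightarrow> (nat \<Rightarrow> 'h) \<Rightarrow> nat \<Rightarrow> 'h" where
  "Tinv emb T i = emb (inverse s_ind) * (T i + 1 - emb s_ind)"

definition phi :: "nat \<Rightarrow> (complex poly fract \<Rightarrow> 'h::ring_1) \<Rightarrow> (nat \<Rightarrow> 'h) \<Rightarrow> nat \<Rightarrow> 'h" where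
  "phi N emb T i = emb (s_ind powi (int i - int N)) *
      prod_list (map T [i..<N]) * prod_list (map T (rev [i..<N]))"

end

theory Submission
  imports Defs
begin

lemma s_nz: "s_ind \<noteq> 0"
  unfolding s_ind_def by (simp add: Zero_fract_def eq_fract)

lemma comm_list:
  assumes H: "is_hecke N emb T" and j: "1 \<le> j" "j < N"
    and ks: "\<forall>k\<in>set ks. 1 \<le> k \<and> k < N \<and> (k + 1 < j \<or> j + 1 < k)"
  shows "T j * prod_list (map T ks) = prod_list (map T ks) * T j"
  using ks
proof (induction ks)
  case Nil then show ?case by simp
next
  case (Cons k ks)
  have c: "T j * T k = T k * T j" using H Cons.prems j unfolding is_hecke_def
    by (metis list.set_intros(1))
  have "T j * prod_list (map T (k # ks)) = (T j * T k) * prod_list (map T ks)"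
    by (simp add: mult.assoc)
  also have "\<dots> = T k * (T j * prod_list (map T ks))" by (simp add: c mult.assoc)
  also have "\<dots> = T k * (prod_list (map T ks) * T j)" using Cons by simp
  finally show ?case by (simp add: mult.assoc)
qed

lemma braid:
  assumes H: "is_hecke N emb T" and "1 \<le> k" "k + 1 < N"
  shows "T k * T (k + 1) * T k = T (k + 1) * T k * T (k + 1)"
  using H assms unfolding is_hecke_def by blast

lemma upt_split:
  assumes "1 \<le> i" "i < j" "j < (N::nat)"
  shows "[i..<N] = [i..<j-1] @ [j-1, j] @ [j+1..<N]"
proof -
  have "[i..<(j-1) + (N-(j-1))] = [i..<j-1] @ [j-1..<(j-1)+(N-(j-1))]"
    using assms by (intro upt_add_eq_append) simp
  then have "[i..<N] = [i..<j-1] @ [j-1..<N]" using assms by simp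
  also have "[j-1..<N] = [j-1, j] @ [j+1..<N]"
    using assms by (simp add: upt_conv_Cons)
  finally show ?thesis .
qed

lemma L2:
  assumes H: "is_hecke N emb T" and ij: "1 \<le> i" "i < j" "j < N"
  shows "T j * prod_list (map T [i..<N]) = prod_list (map T [i..<N]) * T (j - 1)"
proof -
  have sp: "[i..<N] = [i..<j-1] @ [j-1, j] @ [j+1..<N]"
    using ij by (rule upt_split)
  define P1 where "P1 = prod_list (map T [i..<j-1])"
  define P2 where "P2 = prod_list (map T [j+1..<N])"
  have c1: "T j * P1 = P1 * T j" unfolding P1_def
    by (rule comm_list[OF H]) (use ij in auto)
  have c2: "T (j-1) * P2 = P2 * T (j-1)" unfolding P2_def
    by (rule comm_list[OF H]) (use ij in auto)
  have b: "T (j-1) * T j * T (j-1) = T j * T (j-1) * T j"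
    using braid[OF H, of "j-1"] ij by simp
  have "T j * prod_list (map T [i..<N]) = (T j * P1) * T (j-1) * T j * P2"
    unfolding sp P1_def P2_def by (simp add: mult.assoc)
  also have "\<dots> = P1 * (T j * T (j-1) * T j) * P2" by (simp add: c1 mult.assoc)
  also have "\<dots> = P1 * (T (j-1) * T j * T (j-1)) * P2" using b by simp
  also have "\<dots> = P1 * T (j-1) * T j * (T (j-1) * P2)" by (simp add: mult.assoc)
  also have "\<dots> = P1 * T (j-1) * T j * (P2 * T (j-1))" by (simp only: c2)
  also have "\<dots> = prod_list (map T [i..<N]) * T (j - 1)"
    unfolding sp P1_def P2_def by (simp add: mult.assoc)
  finally show ?thesis .
qed

lemma L3:
  assumes H: "is_hecke N emb T" and ij: "1 \<le> i" "i < j" "j < N"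
  shows "T (j - 1) * prod_list (map T (rev [i..<N])) = prod_list (map T (rev [i..<N])) * T j"
proof -
  have sp: "[i..<N] = [i..<j-1] @ [j-1, j] @ [j+1..<N]"
    using ij by (rule upt_split)
  define P1 where "P1 = prod_list (map T (rev [i..<j-1]))"
  define P2 where "P2 = prod_list (map T (rev [j+1..<N]))"
  have c1: "T j * P1 = P1 * T j" unfolding P1_def
    by (rule comm_list[OF H]) (use ij in auto)
  have c2: "T (j-1) * P2 = P2 * T (j-1)" unfolding P2_def
    by (rule comm_list[OF H]) (use ij in auto)
  have b: "T (j-1) * T j * T (j-1) = T j * T (j-1) * T j"
    using braid[OF H, of "j-1"] ij by simp
  have "T (j-1) * prod_list (map T (rev [i..<N])) = (T (j-1) * P2) * T j * T (j-1) * P1"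
    unfolding sp P1_def P2_def by (simp add: mult.assoc)
  also have "\<dots> = (P2 * T (j-1)) * T j * T (j-1) * P1" by (simp only: c2)
  also have "\<dots> = P2 * (T (j-1) * T j * T (j-1)) * P1" by (simp add: mult.assoc)
  also have "\<dots> = P2 * (T j * T (j-1) * T j) * P1" using b by simp
  also have "\<dots> = P2 * T j * T (j-1) * (T j * P1)" by (simp add: mult.assoc)
  also have "\<dots> = P2 * T j * T (j-1) * (P1 * T j)" by (simp only: c1)
  also have "\<dots> = prod_list (map T (rev [i..<N])) * T j"
    unfolding sp P1_def P2_def by (simp add: mult.assoc)
  finally show ?thesis .
qed

lemma Tinv_T:
  assumes H: "is_hecke N emb T" and j: "1 \<le> j" "j < N"
  shows "Tinv emb T j * T j = 1"
proof -
  let ?s = "emb s_ind"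
  have q: "(T j + 1) * (T j - ?s) = 0" using H j unfolding is_hecke_def by blast
  have cm: "?s * T j = T j * ?s" using H unfolding is_hecke_def by blast
  have "(T j + 1 - ?s) * T j = ?s"
  proof -
    have "(T j + 1 - ?s) * T j = T j * T j + T j - ?s * T j" by (simp add: algebra_simps)
    also have "\<dots> = (T j + 1) * (T j - ?s) + ?s"
      by (simp add: algebra_simps cm)
    finally show ?thesis using q by simp
  qed
  moreover have "emb (inverse s_ind) * ?s = 1"
    using H s_nz unfolding is_hecke_def by (metis left_inverse)
  ultimately show ?thesis unfolding Tinv_def by (simp add: mult.assoc)
qed

theorem lemma2p2:
  fixes N i j :: nat and emb :: "complex poly fract \<Rightarrow> 'h::ring_1" and T :: "nat \<Rightarrow> 'h"
  assumes "N \<ge> 2" and "is_hecke N emb T"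
    and "1 \<le> i" and "i \<le> N - 1" and "1 \<le> j" and "j \<le> N - 1"
    and "i \<noteq> j" and "i \<noteq> j + 1"
  shows "Tinv emb T j * phi N emb T i * T j = phi N emb T i"
proof -
  have H: "is_hecke N emb T" by fact
  define A where "A = prod_list (map T [i..<N])"
  define B where "B = prod_list (map T (rev [i..<N]))"
  define c where "c = emb (s_ind powi (int i - int N))"
  have cc: "\<And>x. c * x = x * c" using H unfolding is_hecke_def c_def by blast
  have jN: "j < N" using assms by linarith
  have AB: "T j * (A * B) = (A * B) * T j"
  proof (cases "j < i")
    case True
    then have ji: "j + 1 < i" using assms by linarith
    have "T j * A = A * T j" unfolding A_def
      by (rule comm_list[OF H assms(5) jN]) (use ji in auto)
    moreover have "T j * B = B * T j" unfolding B_def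
      by (rule comm_list[OF H assms(5) jN]) (use ji in auto)
    ultimately show ?thesis by (metis mult.assoc)
  next
    case False
    then have ij: "i < j" using assms by linarith
    have "T j * (A * B) = (T j * A) * B" by (simp add: mult.assoc)
    also have "\<dots> = A * (T (j-1) * B)"
      using L2[OF H assms(3) ij jN] unfolding A_def by (simp add: mult.assoc)
    also have "\<dots> = (A * B) * T j"
      using L3[OF H assms(3) ij jN] unfolding B_def by (simp add: mult.assoc)
    finally show ?thesis .
  qed
  have ph: "phi N emb T i = c * (A * B)" unfolding phi_def A_def B_def c_def by (simp add: mult.assoc)
  have "phi N emb T i * T j = T j * phi N emb T i"
    unfolding ph by (metis AB cc mult.assoc)
  then have "Tinv emb T j * phi N emb T i * T j = (Tinv emb T j * T j) * phi N emb T i"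
    by (simp add: mult.assoc)
  also have "\<dots> = phi N emb T i" using Tinv_T[OF H assms(5) jN] by simp
  finally show ?thesis .
qed

end
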